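(* Let $n\ge 2$ and let $\gamma:I\to\mathbb{R}^2$ ($0\in I$) be a front without inflection points. If $\gamma$ is $\mathcal{A}$-equivalent at $t=0$ to $Cusp_{(n,n+1)}(t)=(t^n,t^{n+1})$, then $t=0$ is a singular point of $Ev^{k}(\gamma)$ for every $k=1,\dots,n-2$ and a regular point of $Ev^{n-1}(\gamma)$.
   Context: A $C^\infty$ curve $\gamma:I\to\mathbb{R}^2$ is a front if there is a $C^\infty$ map $\nu:I\to S^1$ with $\gamma'(t)\cdot\nu(t)=0$ for all $t$ and $(\gamma,\nu):I\to\mathbb{R}^2\times S^1$ an immersion (a Legendre immersion). A point $t$ is singular for a curve $c$ if $c'(t)=\mathbf{0}$, regular otherwise. Let $M$ denote anticlockwise rotation by $\pi/2$, $\mu=M(\nu)$, $\ell(t)=\nu'(t)\cdot\mu(t)$ and $\beta(t)=\gamma'(t)\cdot\mu(t)$. The front has no inflection points if $\ell(t)\neq0$ for all $t\in I$. The evolute is $Ev(\gamma)(t)=\gamma(t)-\frac{\beta(t)}{\ell(t)}\nu(t)$; $(Ev(\gamma),\mu)$ is again a Legendre immersion without inflection points, with curvature $(\ell,\frac{d}{dt}(\beta/\ell))$. Iteratively, with $\beta_0=\beta$, $\beta_k=\frac{d}{dt}(\beta_{k-1}/\ell)$, $Ev^0(\gamma)=\gamma$ and $Ev^{k}(\gamma)=Ev^{k-1}(\gamma)-\frac{\beta_{k-1}}{\ell}M^{k-1}(\nu)$, where $(Ev^k(\gamma),M^k(\nu))$ is a Legendre immersion with curvature $(\ell,\beta_k)$.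 $\mathcal{A}$-equivalence means equivalence via $C^\infty$ diffeomorphism germs of source and target. *)

theory Defs
  imports "HOL-Analysis.Analysis"
begin

definition rotM :: "real \<times> real \<Rightarrow> real \<times> real" where
  "rotM v = (- snd v, fst v)"

text \<open>C-infinity on an open set S: there is a family F containing f, closed under
  taking all directional (Frechet) derivatives, every member differentiable on S.\<close>
definition smooth_on :: "'a::real_normed_vector set \<Rightarrow> ('a \<Rightarrow> 'b::real_normed_vector) \<Rightarrow> bool" where
  "smooth_on S f \<longleftrightarrow> (\<exists>F. f \<in> F \<and>
     (\<forall>g\<in>F. \<exists>g'. (\<forall>x\<in>S. (g has_derivative g' x) (at x)) \<and> (\<forall>v. (\<lambda>x. g' x v) \<in> F)))"

definition diffeo_on :: "'a::real_normed_vector set \<Rightarrow> 'a set \<Rightarrow> ('a \<Rightarrow> 'a) \<Rightarrow> bool" where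
  "diffeo_on U V \<phi> \<longleftrightarrow> open U \<and> open V \<and> \<phi> ` U = V \<and> inj_on \<phi> U
     \<and> smooth_on U \<phi> \<and> smooth_on V (inv_into U \<phi>)"

definition A_equivalent_at ::
  "(real \<Rightarrow> real \<times> real) \<Rightarrow> real \<Rightarrow> (real \<Rightarrow> real \<times> real) \<Rightarrow> real \<Rightarrow> bool" where
  "A_equivalent_at f a g b \<longleftrightarrow>
    (\<exists>U V \<phi> U' V' \<Phi>. diffeo_on U V \<phi> \<and> a \<in> U \<and> \<phi> a = b
       \<and> diffeo_on U' V' \<Phi> \<and> f a \<in> U' \<and> \<Phi> (f a) = g b
       \<and> (\<forall>t\<in>U. f t \<in> U' \<and> \<Phi> (f t) = g (\<phi> t)))"

definition cusp :: "nat \<Rightarrow> real \<Rightarrow> real \<times> real" where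
  "cusp n t = (t ^ n, t ^ (n + 1))"

definition legendre_immersion_on ::
  "real set \<Rightarrow> (real \<Rightarrow> real \<times> real) \<Rightarrow> (real \<Rightarrow> real \<times> real) \<Rightarrow> bool" where
  "legendre_immersion_on I \<gamma> \<nu> \<longleftrightarrow> smooth_on I \<gamma> \<and> smooth_on I \<nu>
     \<and> (\<forall>t\<in>I. norm (\<nu> t) = 1)
     \<and> (\<forall>t\<in>I. vector_derivative \<gamma> (at t) \<bullet> \<nu> t = 0)
     \<and> (\<forall>t\<in>I. vector_derivative (\<lambda>s. (\<gamma> s, \<nu> s)) (at t) \<noteq> 0)"

definition ell :: "(real \<Rightarrow> real \<times> real) \<Rightarrow> real \<Rightarrow> real" where
  "ell \<nu> t = vector_derivative \<nu> (at t) \<bullet> rotM (\<nu> t)"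

fun betak :: "(real \<Rightarrow> real \<times> real) \<Rightarrow> (real \<Rightarrow> real \<times> real) \<Rightarrow> nat \<Rightarrow> real \<Rightarrow> real" where
  "betak \<gamma> \<nu> 0 t = vector_derivative \<gamma> (at t) \<bullet> rotM (\<nu> t)"
| "betak \<gamma> \<nu> (Suc k) t = deriv (\<lambda>s. betak \<gamma> \<nu> k s / ell \<nu> s) t"

fun Ev :: "(real \<Rightarrow> real \<times> real) \<Rightarrow> (real \<Rightarrow> real \<times> real) \<Rightarrow> nat \<Rightarrow> real \<Rightarrow> real \<times> real" where
  "Ev \<gamma> \<nu> 0 t = \<gamma> t"
| "Ev \<gamma> \<nu> (Suc k) t = Ev \<gamma> \<nu> k t - (betak \<gamma> \<nu> k t / ell \<nu> t) *\<^sub>R (rotM ^^ k) (\<nu> t)"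

end

theory Submission
  imports Defs
begin


definition Sm :: "real set \<Rightarrow> (real \<Rightarrow> real) \<Rightarrow> bool" where
  "Sm J f \<longleftrightarrow> (\<exists>F. f \<in> F \<and> (\<forall>g\<in>F. \<exists>g'\<in>F. \<forall>x\<in>J. (g has_real_derivative g' x) (at x)))"

inductive_set alg :: "(real \<Rightarrow> real) set \<Rightarrow> (real \<Rightarrow> real) set" for A where
  base: "f \<in> A \<Longrightarrow> f \<in> alg A"
| const: "(\<lambda>x. c) \<in> alg A"
| add: "f \<in> alg A \<Longrightarrow> g \<in> alg A \<Longrightarrow> (\<lambda>x. f x + g x) \<in> alg A"
| mult: "f \<in> alg A \<Longrightarrow> g \<in> alg A \<Longrightarrow> (\<lambda>x. f x * g x) \<in> alg A"

lemma alg_deriv: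
  assumes A: "\<forall>g\<in>A. \<exists>g'\<in>alg A. \<forall>x\<in>J. (g has_real_derivative g' x) (at x)"
    and f: "f \<in> alg A"
  shows "\<exists>f'\<in>alg A. \<forall>x\<in>J. (f has_real_derivative f' x) (at x)"
  using f
proof induction
  case (base f) then show ?case using A by blast
next
  case (const c) then show ?case by (intro bexI[of _ "\<lambda>x. 0"]) (auto intro: alg.const)
next
  case (add f g)
  then obtain f' g' where "f'\<in>alg A" "g'\<in>alg A" "\<forall>x\<in>J. (f has_real_derivative f' x) (at x)"
     "\<forall>x\<in>J. (g has_real_derivative g' x) (at x)" by blast
  then show ?case by (intro bexI[of _ "\<lambda>x. f' x + g' x"]) (auto intro: alg.add derivative_eq_intros)
next
  case (mult f g)
  then obtain f' g' where "f'\<in>alg A" "g'\<in>alg A" "\<forall>x\<in>J. (f has_real_derivative f' x) (at x)"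
     "\<forall>x\<in>J. (g has_real_derivative g' x) (at x)" by blast
  moreover have "(\<lambda>x. f' x * g x + g' x * f x) \<in> alg A"
    using calculation mult by (intro alg.add alg.mult) auto
  ultimately show ?case by (intro bexI[of _ "\<lambda>x. f' x * g x + g' x * f x"]) (auto intro: DERIV_mult)
qed

lemma alg_Sm:
  assumes "\<forall>g\<in>A. \<exists>g'\<in>alg A. \<forall>x\<in>J. (g has_real_derivative g' x) (at x)" "f \<in> alg A"
  shows "Sm J f"
  unfolding Sm_def using assms alg_deriv[OF assms(1)] by blast

lemma Sm_obtain:
  assumes "Sm J f"
  obtains F where "f \<in> F" "\<forall>g\<in>F. \<exists>g'\<in>F. \<forall>x\<in>J. (g has_real_derivative g' x) (at x)"
  using assms unfolding Sm_def by blast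

lemma Sm_add: assumes "Sm J f" "Sm J g" shows "Sm J (\<lambda>x. f x + g x)"
proof -
  obtain F G where F: "f \<in> F" "\<forall>g\<in>F. \<exists>g'\<in>F. \<forall>x\<in>J. (g has_real_derivative g' x) (at x)"
    and G: "g \<in> G" "\<forall>g\<in>G. \<exists>g'\<in>G. \<forall>x\<in>J. (g has_real_derivative g' x) (at x)"
    using assms Sm_obtain by metis
  have "\<forall>h\<in>F \<union> G. \<exists>g'\<in>alg (F \<union> G). \<forall>x\<in>J. (h has_real_derivative g' x) (at x)"
    using F(2) G(2) by (metis UnCI UnE alg.base)
  then show ?thesis using F G by (intro alg_Sm) (auto intro: alg.add alg.base)
qed

lemma Sm_mult: assumes "Sm J f" "Sm J g" shows "Sm J (\<lambda>x. f x * g x)"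
proof -
  obtain F G where F: "f \<in> F" "\<forall>g\<in>F. \<exists>g'\<in>F. \<forall>x\<in>J. (g has_real_derivative g' x) (at x)"
    and G: "g \<in> G" "\<forall>g\<in>G. \<exists>g'\<in>G. \<forall>x\<in>J. (g has_real_derivative g' x) (at x)"
    using assms Sm_obtain by metis
  have "\<forall>h\<in>F \<union> G. \<exists>g'\<in>alg (F \<union> G). \<forall>x\<in>J. (h has_real_derivative g' x) (at x)"
    using F(2) G(2) by (metis UnCI UnE alg.base)
  then show ?thesis using F G by (intro alg_Sm) (auto intro: alg.mult alg.base)
qed

lemma Sm_const: "Sm J (\<lambda>x. c)"
  by (rule alg_Sm[of "{}"]) (auto intro: alg.const)

lemma Sm_inverse: assumes "Sm J f" "\<forall>x\<in>J. f x \<noteq> 0" shows "Sm J (\<lambda>x. inverse (f x))"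
proof -
  obtain F where F: "f \<in> F" "\<forall>g\<in>F. \<exists>g'\<in>F. \<forall>x\<in>J. (g has_real_derivative g' x) (at x)"
    using assms Sm_obtain by metis
  obtain f' where f': "f' \<in> F" "\<forall>x\<in>J. (f has_real_derivative f' x) (at x)" using F by blast
  let ?A = "insert (\<lambda>x. inverse (f x)) F"
  have "(\<lambda>x. (\<lambda>x. (-1) * f' x) x * ((\<lambda>x. inverse (f x)) x * (\<lambda>x. inverse (f x)) x)) \<in> alg ?A"
    using f' by (intro alg.mult alg.const alg.base) auto
  moreover have "\<forall>x\<in>J. ((\<lambda>x. inverse (f x)) has_real_derivative (-1) * f' x * (inverse (f x) * inverse (f x))) (at x)"
  proof
    fix x assume x: "x \<in> J"
    have "((\<lambda>x. inverse (f x)) has_real_derivative (- (f' x * inverse(f x ^ Suc (Suc 0))))) (at x)"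
      using f'(2) x assms(2) by (intro DERIV_inverse_fun) auto
    then show "((\<lambda>x. inverse (f x)) has_real_derivative (-1) * f' x * (inverse (f x) * inverse (f x))) (at x)"
      by (simp add: algebra_simps power2_eq_square)
  qed
  ultimately have "\<exists>g'\<in>alg ?A. \<forall>x\<in>J. ((\<lambda>x. inverse (f x)) has_real_derivative g' x) (at x)"
    by (intro bexI) (auto simp: mult.assoc)
  moreover have "\<forall>h\<in>F. \<exists>g'\<in>alg ?A. \<forall>x\<in>J. (h has_real_derivative g' x) (at x)"
    using F(2) by (meson alg.base insertCI)
  ultimately show ?thesis by (intro alg_Sm[of ?A]) (auto intro: alg.base)
qed

lemma Sm_deriv_at: assumes "Sm J f" "x \<in> J" shows "(f has_real_derivative deriv f x) (at x)"
  using assms unfolding Sm_def by (metis DERIV_imp_deriv)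

lemma Sm_cong: assumes "Sm J f" "open J" "\<And>x. x \<in> J \<Longrightarrow> g x = f x" shows "Sm J g"
proof -
  obtain F where F: "f \<in> F" "\<forall>g\<in>F. \<exists>g'\<in>F. \<forall>x\<in>J. (g has_real_derivative g' x) (at x)"
    using assms Sm_obtain by metis
  obtain f' where f': "f' \<in> F" "\<forall>x\<in>J. (f has_real_derivative f' x) (at x)" using F by blast
  have "\<forall>x\<in>J. (g has_real_derivative f' x) (at x)"
    using f' assms by (metis has_field_derivative_transform_within_open)
  then show ?thesis unfolding Sm_def using F f'
    by (intro exI[of _ "insert g F"]) (metis insert_iff)
qed

lemma Sm_deriv: assumes "Sm J f" "open J" shows "Sm J (deriv f)"
proof -
  obtain F where F: "f \<in> F" "\<forall>g\<in>F. \<exists>g'\<in>F. \<forall>x\<in>J. (g has_real_derivative g' x) (at x)"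
    using assms Sm_obtain by metis
  obtain f' where f': "f' \<in> F" "\<forall>x\<in>J. (f has_real_derivative f' x) (at x)" using F by blast
  have "Sm J f'" unfolding Sm_def using F f' by blast
  then show ?thesis using assms(2) by (rule Sm_cong) (use f' DERIV_imp_deriv in blast)
qed

lemma Sm_derivs: assumes "Sm J f" "open J" shows "Sm J ((deriv ^^ i) f)"
  by (induction i) (auto intro: Sm_deriv assms)



definition ordeq :: "nat \<Rightarrow> (real \<Rightarrow> real) \<Rightarrow> bool" where
  "ordeq m f \<longleftrightarrow> (\<forall>i<m. (deriv ^^ i) f 0 = 0) \<and> (deriv ^^ m) f 0 \<noteq> 0"

lemma derivs_Suc: "(deriv ^^ i) (deriv f) = (deriv ^^ Suc i) f"
  by (simp add: funpow_Suc_right del: funpow.simps)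

lemma taylor_lim:
  assumes "Sm J f" "open J" "0 \<in> J" "\<forall>i<m. (deriv ^^ i) f 0 = 0"
  shows "((\<lambda>t. f t / t ^ m) \<longlongrightarrow> (deriv ^^ m) f 0 / fact m) (at 0)"
  using assms
proof (induction m arbitrary: f)
  case 0
  then have "isCont f 0" using Sm_deriv_at DERIV_isCont by blast
  then show ?case by (simp add: isContD)
next
  case (Suc m)
  have Sd: "Sm J (deriv f)" using Suc.prems Sm_deriv by blast
  have "\<forall>i<m. (deriv ^^ i) (deriv f) 0 = 0" using Suc.prems(4) by (simp add: derivs_Suc del: funpow.simps)
  from Suc.IH[OF Sd Suc.prems(2,3) this]
  have L: "((\<lambda>t. deriv f t / t ^ m) \<longlongrightarrow> (deriv ^^ Suc m) f 0 / fact m) (at 0)"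
    by (simp add: derivs_Suc del: funpow.simps)
  have L2: "((\<lambda>t. deriv f t / (real (Suc m) * t ^ m)) \<longlongrightarrow> (deriv ^^ Suc m) f 0 / fact (Suc m)) (at 0)"
  proof -
    define d where "d = (deriv ^^ Suc m) f 0"
    have "((\<lambda>t. (deriv f t / t ^ m) / real (Suc m)) \<longlongrightarrow> (d / fact m) / real (Suc m)) (at 0)"
      using tendsto_divide[OF L tendsto_const[of "real (Suc m)"]] unfolding d_def by simp
    moreover have "(\<lambda>t. (deriv f t / t ^ m) / real (Suc m)) = (\<lambda>t. deriv f t / (real (Suc m) * t ^ m))"
      by (simp add: field_simps)
    moreover have "(d / fact m) / real (Suc m) = d / fact (Suc m)"
      by (simp add: field_simps)
    ultimately show ?thesis unfolding d_def by (simp add: mult.commute[of "fact m"])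
  qed
  have f0: "f 0 = 0" using Suc.prems(4) by auto
  have "isCont f 0" using Suc.prems Sm_deriv_at DERIV_isCont by blast
  then have "(f \<longlongrightarrow> 0) (at 0)" using f0 by (metis isContD)
  moreover have "((\<lambda>t::real. t ^ Suc m) \<longlongrightarrow> 0) (at 0)"
    using tendsto_power[OF tendsto_ident_at[of "0::real" UNIV], of "Suc m"] by simp
  moreover have "eventually (\<lambda>t::real. t ^ Suc m \<noteq> 0) (at 0)"
    by (simp add: eventually_at_filter)
  moreover have "eventually (\<lambda>t::real. real (Suc m) * t ^ m \<noteq> 0) (at 0)"
  proof -
    have "eventually (\<lambda>t::real. t \<noteq> 0) (at 0)" by (simp add: eventually_at_filter)
    then show ?thesis by (rule eventually_mono) simp
  qed
  moreover have "eventually (\<lambda>t. DERIV f t :> deriv f t) (at 0)"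
    using eventually_at_in_open'[OF Suc.prems(2,3)] Suc.prems(1)
    by (auto elim!: eventually_mono intro: Sm_deriv_at)
  moreover have "eventually (\<lambda>t. DERIV (\<lambda>t. t ^ Suc m) t :> real (Suc m) * t ^ m) (at 0)"
    using DERIV_pow[of "Suc m"] by (intro always_eventually) simp
  ultimately show ?case using L2 by (rule lhopital)
qed

lemma ordeq_lim:
  assumes "Sm J f" "open J" "0 \<in> J" "ordeq m f"
  shows "\<exists>c. c \<noteq> 0 \<and> ((\<lambda>t. f t / t ^ m) \<longlongrightarrow> c) (at 0)"
  using taylor_lim[OF assms(1-3)] assms(4) unfolding ordeq_def
  by (intro exI[of _ "(deriv^^m) f 0 / fact m"]) auto

lemma lim_ordeq:
  assumes "Sm J f" "open J" "0 \<in> J" "c \<noteq> 0" "((\<lambda>t. f t / t ^ m) \<longlongrightarrow> c) (at 0)"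
  shows "ordeq m f"
proof (cases "\<exists>i<m. (deriv ^^ i) f 0 \<noteq> 0")
  case True
  then obtain i where i: "i < m \<and> (deriv ^^ i) f 0 \<noteq> 0" "\<forall>j<i. \<not> (j < m \<and> (deriv ^^ j) f 0 \<noteq> 0)"
    using exists_least_iff[of "\<lambda>i. i < m \<and> (deriv ^^ i) f 0 \<noteq> 0"] by blast
  have "\<forall>j<i. (deriv ^^ j) f 0 = 0" using i by auto
  from taylor_lim[OF assms(1-3) this]
  have A: "((\<lambda>t. f t / t ^ i) \<longlongrightarrow> (deriv ^^ i) f 0 / fact i) (at 0)" .
  have "((\<lambda>t. t ^ (m - i) * (f t / t ^ m)) \<longlongrightarrow> 0 ^ (m - i) * c) (at 0)"
    by (intro tendsto_intros assms(5))
  moreover have "(0::real) ^ (m - i) * c = 0" using i by simp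
  ultimately have B0: "((\<lambda>t. t ^ (m - i) * (f t / t ^ m)) \<longlongrightarrow> 0) (at 0)" by simp
  have "eventually (\<lambda>t. t ^ (m - i) * (f t / t ^ m) = f t / t ^ i) (at (0::real))"
  proof -
    have "t ^ (m - i) * (f t / t ^ m) = f t / t ^ i" if "t \<noteq> 0" for t :: real
    proof -
      have "t ^ m = t ^ (m - i) * t ^ i" using i by (simp add: power_add[symmetric])
      then show ?thesis using that by (simp add: field_simps)
    qed
    then show ?thesis by (simp add: eventually_at_filter)
  qed
  with B0 have "((\<lambda>t. f t / t ^ i) \<longlongrightarrow> 0) (at 0)" by (rule Lim_transform_eventually)
  with A have "(deriv ^^ i) f 0 / fact i = 0" using tendsto_unique[OF at_neq_bot A] by blast
  with i show ?thesis by simp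
next
  case False
  then have Z: "\<forall>i<m. (deriv ^^ i) f 0 = 0" by blast
  from taylor_lim[OF assms(1-3) this] assms(5) have E: "(deriv ^^ m) f 0 / fact m = c"
    using tendsto_unique[OF at_neq_bot] by blast
  have "(deriv ^^ m) f 0 \<noteq> 0"
  proof
    assume "(deriv ^^ m) f 0 = 0"
    then have "c = 0" using E by (metis div_0)
    then show False using assms(4) by blast
  qed
  then show ?thesis unfolding ordeq_def using Z by (intro conjI)
qed

lemma ordeq_deriv: assumes "ordeq (Suc m) f" shows "ordeq m (deriv f)"
proof -
  have "\<forall>i<m. (deriv ^^ Suc i) f 0 = 0" "(deriv ^^ Suc m) f 0 \<noteq> 0"
    using assms unfolding ordeq_def by auto
  then show ?thesis unfolding ordeq_def derivs_Suc by (intro conjI)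
qed



lemma bl_real: fixes L :: "real \<Rightarrow> 'b::real_normed_vector"
  assumes "bounded_linear L" shows "L h = h *\<^sub>R L 1"
proof -
  have "L (h *\<^sub>R 1) = h *\<^sub>R L 1" using assms bounded_linear.linear linear_scale by blast
  then show ?thesis by simp
qed

lemma smooth_on_D:
  assumes "smooth_on S f"
  shows "\<exists>Df. (\<forall>x\<in>S. (f has_derivative Df x) (at x)) \<and> (\<forall>v. smooth_on S (\<lambda>x. Df x v))"
proof -
  obtain F where F: "f \<in> F" "\<forall>g\<in>F. \<exists>g'. (\<forall>x\<in>S. (g has_derivative g' x) (at x)) \<and> (\<forall>v. (\<lambda>x. g' x v) \<in> F)"
    using assms unfolding smooth_on_def by blast
  then obtain g' where "\<forall>x\<in>S. (f has_derivative g' x) (at x)" "\<forall>v. (\<lambda>x. g' x v) \<in> F" by blast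
  moreover have "\<forall>v. smooth_on S (\<lambda>x. g' x v)" using calculation(2) F(2) unfolding smooth_on_def by blast
  ultimately show ?thesis by blast
qed

lemma smooth_on_vd:
  fixes f :: "real \<Rightarrow> 'b::real_normed_vector"
  assumes "smooth_on S f"
  shows "\<exists>fd. (\<forall>x\<in>S. (f has_vector_derivative fd x) (at x)) \<and> smooth_on S fd"
proof -
  obtain Df where D: "\<forall>x\<in>S. (f has_derivative Df x) (at x)" "\<forall>v. smooth_on S (\<lambda>x. Df x v)"
    using smooth_on_D[OF assms] by blast
  have "\<forall>x\<in>S. (f has_vector_derivative Df x 1) (at x)"
  proof
    fix x assume "x \<in> S"
    then have d: "(f has_derivative Df x) (at x)" using D by blast
    then have "Df x = (\<lambda>h. h *\<^sub>R Df x 1)" using bl_real has_derivative_bounded_linear by blast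
    then show "(f has_vector_derivative Df x 1) (at x)" using d unfolding has_vector_derivative_def by simp
  qed
  then show ?thesis using D(2) by (intro exI[of _ "\<lambda>x. Df x 1"]) auto
qed

lemma smooth_on_isCont: assumes "smooth_on S f" "x \<in> S" shows "isCont f x"
  using smooth_on_D[OF assms(1)] assms(2) has_derivative_continuous by blast

lemma smooth_Sm_real: fixes f :: "real \<Rightarrow> real" assumes "smooth_on S f" shows "Sm S f"
proof -
  obtain F where F: "f \<in> F" "\<forall>g\<in>F. \<exists>g'. (\<forall>x\<in>S. (g has_derivative g' x) (at x)) \<and> (\<forall>v. (\<lambda>x. g' x v) \<in> F)"
    using assms unfolding smooth_on_def by blast
  have "\<forall>g\<in>F. \<exists>g'\<in>F. \<forall>x\<in>S. (g has_real_derivative g' x) (at x)"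
  proof
    fix g assume "g \<in> F"
    then obtain g' where g': "\<forall>x\<in>S. (g has_derivative g' x) (at x)" "\<forall>v. (\<lambda>x. g' x v) \<in> F" using F by blast
    have "\<forall>x\<in>S. (g has_real_derivative g' x 1) (at x)"
    proof
      fix x assume "x \<in> S"
      then have d: "(g has_derivative g' x) (at x)" using g' by blast
      then have "g' x = (\<lambda>h. h *\<^sub>R g' x 1)" using bl_real has_derivative_bounded_linear by blast
      then show "(g has_real_derivative g' x 1) (at x)" using d
        unfolding has_real_derivative_iff_has_vector_derivative has_vector_derivative_def by simp
    qed
    then show "\<exists>g'\<in>F. \<forall>x\<in>S. (g has_real_derivative g' x) (at x)" using g'(2)
      by (intro bexI[of _ "\<lambda>x. g' x 1"]) auto
  qed
  then show ?thesis unfolding Sm_def using F by blast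
qed

lemma smooth_Sm_comp:
  fixes f :: "real \<Rightarrow> real \<times> real"
  assumes "smooth_on S f"
  shows "Sm S (\<lambda>x. fst (f x))" "Sm S (\<lambda>x. snd (f x))"
proof -
  obtain F where F: "f \<in> F" "\<forall>g\<in>F. \<exists>g'. (\<forall>x\<in>S. (g has_derivative g' x) (at x)) \<and> (\<forall>v. (\<lambda>x. g' x v) \<in> F)"
    using assms unfolding smooth_on_def by blast
  define A where "A = (\<lambda>g x. fst (g x)) ` F \<union> (\<lambda>g x. snd (g x)) ` F"
  have "\<forall>h\<in>A. \<exists>h'\<in>A. \<forall>x\<in>S. (h has_real_derivative h' x) (at x)"
  proof
    fix h assume "h \<in> A"
    then obtain g where g: "g \<in> F" "h = (\<lambda>x. fst (g x)) \<or> h = (\<lambda>x. snd (g x))" unfolding A_def by blast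
    then obtain g' where g': "\<forall>x\<in>S. (g has_derivative g' x) (at x)" "\<forall>v. (\<lambda>x. g' x v) \<in> F" using F by blast
    have vd: "\<forall>x\<in>S. (g has_vector_derivative g' x 1) (at x)"
    proof
      fix x assume "x \<in> S"
      then have d: "(g has_derivative g' x) (at x)" using g' by blast
      then have "g' x = (\<lambda>h. h *\<^sub>R g' x 1)" using bl_real has_derivative_bounded_linear by blast
      then show "(g has_vector_derivative g' x 1) (at x)" using d unfolding has_vector_derivative_def by simp
    qed
    have g1: "(\<lambda>x. g' x 1) \<in> F" using g'(2) by blast
    have m1: "(\<lambda>x. fst (g' x 1)) \<in> A" "(\<lambda>x. snd (g' x 1)) \<in> A"
      unfolding A_def using imageI[OF g1, of "\<lambda>g x. fst (g x)"] imageI[OF g1, of "\<lambda>g x. snd (g x)"] by auto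
    have "\<forall>x\<in>S. ((\<lambda>x. fst (g x)) has_real_derivative fst (g' x 1)) (at x)"
         "\<forall>x\<in>S. ((\<lambda>x. snd (g x)) has_real_derivative snd (g' x 1)) (at x)"
      using vd unfolding has_real_derivative_iff_has_vector_derivative has_vector_derivative_def
      by (auto intro!: derivative_eq_intros)
    then show "\<exists>h'\<in>A. \<forall>x\<in>S. (h has_real_derivative h' x) (at x)" using g(2) m1
      by (metis (no_types, lifting))
  qed
  moreover have "(\<lambda>x. fst (f x)) \<in> A" "(\<lambda>x. snd (f x)) \<in> A" using F unfolding A_def by blast+
  ultimately show "Sm S (\<lambda>x. fst (f x))" "Sm S (\<lambda>x. snd (f x))" unfolding Sm_def by blast+
qed



lemma rotM_scale: "rotM (c *\<^sub>R v) = c *\<^sub>R rotM v" by (simp add: rotM_def)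
lemma rotM_rotM: "rotM (rotM v) = - v" by (cases v) (simp add: rotM_def)
lemma rotM_minus: "rotM (- v) = - rotM v" by (simp add: rotM_def)
lemma rotMk_scale: "(rotM ^^ k) (c *\<^sub>R v) = c *\<^sub>R (rotM ^^ k) v"
  by (induction k) (auto simp: rotM_scale)
lemma rotMk_minus: "(rotM ^^ k) (- v) = - (rotM ^^ k) v"
  by (induction k) (auto simp: rotM_minus)
lemma rotMk_Suc2: "(rotM ^^ Suc (Suc k)) v = - (rotM ^^ k) v"
proof -
  have "(rotM ^^ Suc (Suc k)) v = (rotM ^^ k) (rotM (rotM v))"
    by (simp only: funpow_Suc_right o_apply)
  then show ?thesis by (simp add: rotM_rotM rotMk_minus)
qed
lemma rotMk_Suc: "(rotM ^^ k) (rotM v) = (rotM ^^ Suc k) v"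
  by (simp only: funpow_Suc_right o_apply)
lemma norm_rotM: "norm (rotM v) = norm v"
  by (cases v) (simp add: rotM_def norm_Pair add.commute)
lemma norm_rotMk: "norm ((rotM ^^ k) v) = norm v"
  by (induction k) (auto simp: norm_rotM)

lemma bl_rotM: "bounded_linear rotM"
proof -
  have "rotM = (\<lambda>v. (- snd v, fst v))" by (simp add: rotM_def fun_eq_iff)
  moreover have "bounded_linear (\<lambda>v::real\<times>real. (- snd v, fst v))"
    by (intro bounded_linear_Pair bounded_linear_minus bounded_linear_fst bounded_linear_snd)
  ultimately show ?thesis by simp
qed

lemma vd_rotMk:
  assumes "(f has_vector_derivative f') (at t)"
  shows "((\<lambda>s. (rotM ^^ k) (f s)) has_vector_derivative (rotM ^^ k) f') (at t)"
proof (induction k)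
  case 0 then show ?case using assms by simp
next
  case (Suc k)
  then show ?case using bounded_linear.has_vector_derivative[OF bl_rotM Suc] by simp
qed

lemma decomp2:
  fixes v u :: "real \<times> real"
  assumes "norm u = 1" "v \<bullet> u = 0"
  shows "v = (v \<bullet> rotM u) *\<^sub>R rotM u"
proof -
  obtain a b where u: "u = (a, b)" by (cases u)
  obtain x y where v: "v = (x, y)" by (cases v)
  have "sqrt (a\<^sup>2 + b\<^sup>2) = 1" using assms(1) u by (simp add: norm_Pair)
  then have n: "a\<^sup>2 + b\<^sup>2 = 1" by (metis real_sqrt_eq_1_iff)
  have o: "x * a + y * b = 0" using assms(2) u v by simp
  have "x = (- x * b + y * a) * (- b)"
  proof -
    have "x = x * (a\<^sup>2 + b\<^sup>2)" using n by simp
    also have "\<dots> = (- x * b + y * a) * (- b) + a * (x * a + y * b)" by (simp add: algebra_simps power2_eq_square)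
    finally show ?thesis using o by simp
  qed
  moreover have "y = (- x * b + y * a) * a"
  proof -
    have "y = y * (a\<^sup>2 + b\<^sup>2)" using n by simp
    also have "\<dots> = (- x * b + y * a) * a + b * (x * a + y * b)" by (simp add: algebra_simps power2_eq_square)
    finally show ?thesis using o by simp
  qed
  ultimately show ?thesis using u v by (simp add: rotM_def)
qed

lemma orth_nonzero:
  fixes w u :: "real \<times> real"
  assumes "norm u = 1" "w \<bullet> u = 0" "w \<noteq> 0"
  shows "w \<bullet> rotM u \<noteq> 0"
  using decomp2[OF assms(1,2)] assms(3) by force



context
  fixes I :: "real set" and \<gamma> \<nu> :: "real \<Rightarrow> real \<times> real"
  assumes oI: "open I" and LI: "legendre_immersion_on I \<gamma> \<nu>" and ln: "\<forall>t\<in>I. ell \<nu> t \<noteq> 0"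
begin

lemma sg: "smooth_on I \<gamma>" and sn: "smooth_on I \<nu>" and n1: "\<forall>t\<in>I. norm (\<nu> t) = 1"
  and orth: "\<forall>t\<in>I. vector_derivative \<gamma> (at t) \<bullet> \<nu> t = 0"
  using LI unfolding legendre_immersion_on_def by auto

lemma vds: obtains gd nd where
  "\<forall>t\<in>I. (\<gamma> has_vector_derivative gd t) (at t)" "smooth_on I gd"
  "\<forall>t\<in>I. (\<nu> has_vector_derivative nd t) (at t)" "smooth_on I nd"
  using smooth_on_vd[OF sg] smooth_on_vd[OF sn] by blast

lemma nu_orth: assumes "t \<in> I" "(\<nu> has_vector_derivative nd) (at t)" shows "nd \<bullet> \<nu> t = 0"
proof -
  have c: "((\<lambda>s. \<nu> s \<bullet> \<nu> s) has_vector_derivative (\<nu> t \<bullet> nd + nd \<bullet> \<nu> t)) (at t)"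
    using bounded_bilinear.has_vector_derivative[OF bounded_bilinear_inner assms(2) assms(2)] .
  have "((\<lambda>s. 1::real) has_vector_derivative 0) (at t)" by simp
  then have "((\<lambda>s. \<nu> s \<bullet> \<nu> s) has_vector_derivative 0) (at t)"
  proof (rule has_vector_derivative_transform_within_open[OF _ oI assms(1)])
    fix y assume "y \<in> I"
    then have "norm (\<nu> y) = 1" using n1 by blast
    then show "1 = \<nu> y \<bullet> \<nu> y" by (metis power2_norm_eq_inner power_one)
  qed
  with c have "\<nu> t \<bullet> nd + nd \<bullet> \<nu> t = 0" using vector_derivative_unique_at by blast
  then show ?thesis by (simp add: inner_commute)
qed

lemma nu_vd: assumes "t \<in> I" shows "(\<nu> has_vector_derivative ell \<nu> t *\<^sub>R rotM (\<nu> t)) (at t)"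
proof -
  obtain nd where nd: "(\<nu> has_vector_derivative nd) (at t)"
    using vds assms by metis
  have e: "ell \<nu> t = nd \<bullet> rotM (\<nu> t)" unfolding ell_def using vector_derivative_at[OF nd] by simp
  have "nd = (nd \<bullet> rotM (\<nu> t)) *\<^sub>R rotM (\<nu> t)"
    using decomp2 n1 assms nu_orth[OF assms nd] by blast
  then show ?thesis using nd e by simp
qed

lemma gamma_vd: assumes "t \<in> I" shows "(\<gamma> has_vector_derivative betak \<gamma> \<nu> 0 t *\<^sub>R rotM (\<nu> t)) (at t)"
proof -
  obtain gd where gd: "(\<gamma> has_vector_derivative gd) (at t)"
    using vds assms by metis
  have e: "betak \<gamma> \<nu> 0 t = gd \<bullet> rotM (\<nu> t)" using vector_derivative_at[OF gd] by simp
  have "gd \<bullet> \<nu> t = 0" using orth assms vector_derivative_at[OF gd] by metis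
  then have "gd = (gd \<bullet> rotM (\<nu> t)) *\<^sub>R rotM (\<nu> t)"
    using decomp2 n1 assms by blast
  then show ?thesis using gd e by simp
qed

lemma Sm_neg_snd: "smooth_on I (f::real\<Rightarrow>real\<times>real) \<Longrightarrow> Sm I (\<lambda>t. - snd (f t))"
proof -
  assume a: "smooth_on I f"
  have "Sm I (\<lambda>t. (-1) * snd (f t))" by (rule Sm_mult[OF Sm_const smooth_Sm_comp(2)[OF a]])
  then show ?thesis by simp
qed

lemma inner_rot_expand: "(a::real\<times>real) \<bullet> rotM b = fst a * (- snd b) + snd a * fst b"
  by (cases a; cases b) (simp add: rotM_def)

lemma Sm_ell: "Sm I (ell \<nu>)"
proof -
  obtain nd where nd: "\<forall>t\<in>I. (\<nu> has_vector_derivative nd t) (at t)" "smooth_on I nd"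
    using vds by metis
  have "Sm I (\<lambda>t. fst (nd t) * (- snd (\<nu> t)) + snd (nd t) * fst (\<nu> t))"
    using smooth_Sm_comp[OF nd(2)] smooth_Sm_comp[OF sn]
    by (intro Sm_add Sm_mult Sm_neg_snd[OF sn]) auto
  then show ?thesis
  proof (rule Sm_cong[OF _ oI])
    fix x assume "x \<in> I"
    then show "ell \<nu> x = fst (nd x) * - snd (\<nu> x) + snd (nd x) * fst (\<nu> x)"
      unfolding ell_def using vector_derivative_at nd(1) inner_rot_expand by metis
  qed
qed

lemma Sm_beta0: "Sm I (betak \<gamma> \<nu> 0)"
proof -
  obtain gd where gd: "\<forall>t\<in>I. (\<gamma> has_vector_derivative gd t) (at t)" "smooth_on I gd"
    using vds by metis
  have "Sm I (\<lambda>t. fst (gd t) * (- snd (\<nu> t)) + snd (gd t) * fst (\<nu> t))"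
    using smooth_Sm_comp[OF gd(2)] smooth_Sm_comp[OF sn]
    by (intro Sm_add Sm_mult Sm_neg_snd[OF sn]) auto
  then show ?thesis
  proof (rule Sm_cong[OF _ oI])
    fix x assume "x \<in> I"
    then show "betak \<gamma> \<nu> 0 x = fst (gd x) * - snd (\<nu> x) + snd (gd x) * fst (\<nu> x)"
      using vector_derivative_at gd(1) inner_rot_expand by (metis betak.simps(1))
  qed
qed

lemma Sm_quot: "Sm I f \<Longrightarrow> Sm I (\<lambda>s. f s / ell \<nu> s)"
  using Sm_mult[OF _ Sm_inverse[OF Sm_ell ln]] by (simp add: divide_inverse)

lemma Sm_betak: "Sm I (betak \<gamma> \<nu> k)"
proof (induction k)
  case 0 then show ?case by (rule Sm_beta0)
next
  case (Suc k)
  have "Sm I (deriv (\<lambda>s. betak \<gamma> \<nu> k s / ell \<nu> s))"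
    by (rule Sm_deriv[OF Sm_quot[OF Suc] oI])
  moreover have "betak \<gamma> \<nu> (Suc k) = deriv (\<lambda>s. betak \<gamma> \<nu> k s / ell \<nu> s)" by (rule ext) simp
  ultimately show ?case by simp
qed

lemma Ev_vd: assumes "t \<in> I"
  shows "(Ev \<gamma> \<nu> k has_vector_derivative betak \<gamma> \<nu> k t *\<^sub>R (rotM ^^ Suc k) (\<nu> t)) (at t)"
proof (induction k)
  case 0 then show ?case using gamma_vd[OF assms] by simp
next
  case (Suc k)
  have E: "Ev \<gamma> \<nu> (Suc k) = (\<lambda>t. Ev \<gamma> \<nu> k t - (betak \<gamma> \<nu> k t / ell \<nu> t) *\<^sub>R (rotM ^^ k) (\<nu> t))"
    by (rule ext) simp
  have q: "((\<lambda>s. betak \<gamma> \<nu> k s / ell \<nu> s) has_real_derivative betak \<gamma> \<nu> (Suc k) t) (at t)"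
    using Sm_deriv_at[OF Sm_quot[OF Sm_betak] assms] by simp
  have r: "((\<lambda>s. (rotM ^^ k) (\<nu> s)) has_vector_derivative (rotM ^^ k) (ell \<nu> t *\<^sub>R rotM (\<nu> t))) (at t)"
    by (rule vd_rotMk[OF nu_vd[OF assms]])
  have D: "(Ev \<gamma> \<nu> (Suc k) has_vector_derivative
     betak \<gamma> \<nu> k t *\<^sub>R (rotM ^^ Suc k) (\<nu> t) -
     ((betak \<gamma> \<nu> k t / ell \<nu> t) *\<^sub>R (rotM ^^ k) (ell \<nu> t *\<^sub>R rotM (\<nu> t))
      + betak \<gamma> \<nu> (Suc k) t *\<^sub>R (rotM ^^ k) (\<nu> t))) (at t)"
    unfolding E by (intro has_vector_derivative_diff Suc has_vector_derivative_scaleR q r)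
  have Q: "betak \<gamma> \<nu> k t *\<^sub>R (rotM ^^ Suc k) (\<nu> t) -
     ((betak \<gamma> \<nu> k t / ell \<nu> t) *\<^sub>R (rotM ^^ k) (ell \<nu> t *\<^sub>R rotM (\<nu> t))
      + betak \<gamma> \<nu> (Suc k) t *\<^sub>R (rotM ^^ k) (\<nu> t))
     = betak \<gamma> \<nu> (Suc k) t *\<^sub>R (rotM ^^ Suc (Suc k)) (\<nu> t)"
    using ln assms by (simp add: rotMk_scale rotMk_Suc rotMk_Suc2 del: funpow.simps)
  show ?case using D unfolding Q .
qed

lemma Ev_vder: assumes "0 \<in> I"
  shows "vector_derivative (Ev \<gamma> \<nu> k) (at 0) = 0 \<longleftrightarrow> betak \<gamma> \<nu> k 0 = 0"
proof -
  have "norm ((rotM ^^ Suc k) (\<nu> 0)) = 1" using norm_rotMk n1 assms by metis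
  then have "(rotM ^^ Suc k) (\<nu> 0) \<noteq> 0" by auto
  then show ?thesis using vector_derivative_at[OF Ev_vd[OF assms]] by simp
qed

end


lemma deriv_inv_id:
  assumes "(f has_derivative Df) (at x)" "(g has_derivative Dg) (at (f x))" "open S" "x \<in> S"
    "\<And>y. y \<in> S \<Longrightarrow> g (f y) = y"
  shows "Dg (Df h) = h"
proof -
  have "((\<lambda>y. g (f y)) has_derivative (\<lambda>h. Dg (Df h))) (at x)"
    by (rule has_derivative_compose[OF assms(1,2)])
  then have "((\<lambda>y. y) has_derivative (\<lambda>h. Dg (Df h))) (at x)"
    by (rule has_derivative_transform_within_open[OF _ assms(3,4)]) (use assms(5) in auto)
  then have "(\<lambda>h. Dg (Df h)) = (\<lambda>h. h)" using has_derivative_unique has_derivative_ident by blast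
  then show ?thesis by metis
qed

lemma lin_facts:
  assumes "bounded_linear L"
  shows "L (a + b) = L a + L b" "L (c *\<^sub>R a) = c *\<^sub>R L a" "L 0 = 0"
  using assms bounded_linear.linear linear_add linear_scale linear_0 by blast+

lemma rot_inner: "rotM v \<bullet> v = 0" "rotM v \<bullet> rotM v = (norm v)\<^sup>2"
  by (cases v; simp add: rotM_def norm_Pair power2_eq_square)+



lemma beta0_lim:
  fixes I :: "real set" and \<gamma> \<nu> :: "real \<Rightarrow> real \<times> real" and n :: nat
  assumes n2: "n \<ge> 2" and oI: "open I" and I0: "0 \<in> I"
    and LI: "legendre_immersion_on I \<gamma> \<nu>" and ln: "\<forall>t\<in>I. ell \<nu> t \<noteq> 0"
    and AE: "A_equivalent_at \<gamma> 0 (cusp n) 0"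
  shows "\<exists>c. c \<noteq> 0 \<and> ((\<lambda>t. betak \<gamma> \<nu> 0 t / t ^ (n - 1)) \<longlongrightarrow> c) (at 0)"
proof -
  obtain U V \<phi> U' V' \<Phi> where
    dU: "diffeo_on U V \<phi>" and U0: "0 \<in> U" and phi0: "\<phi> 0 = 0" and dU': "diffeo_on U' V' \<Phi>"
    and rel: "\<forall>t\<in>U. \<gamma> t \<in> U' \<and> \<Phi> (\<gamma> t) = cusp n (\<phi> t)"
    using AE unfolding A_equivalent_at_def by blast
  have oU: "open U" and VU: "\<phi> ` U = V" and injU: "inj_on \<phi> U" and sphi: "smooth_on U \<phi>"
    and sinv: "smooth_on V (inv_into U \<phi>)" using dU unfolding diffeo_on_def by auto
  have oU': "open U'" and VU': "\<Phi> ` U' = V'" and injU': "inj_on \<Phi> U'" and sPhi: "smooth_on U' \<Phi>"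
    and sPsi: "smooth_on V' (inv_into U' \<Phi>)" using dU' unfolding diffeo_on_def by auto
  have sn: "smooth_on I \<nu>" and n1: "\<forall>t\<in>I. norm (\<nu> t) = 1"
    using LI unfolding legendre_immersion_on_def by auto
  define \<Psi> where "\<Psi> = inv_into U' \<Phi>"
  define p where "p = (\<lambda>t. cusp n (\<phi> t))"
  have c0: "cusp n 0 = 0" using n2 by (simp add: cusp_def zero_prod_def)
  have pV: "\<forall>t\<in>U. p t \<in> V'" using rel VU' unfolding p_def by (metis imageI)
  have Psip: "\<forall>t\<in>U. \<Psi> (p t) = \<gamma> t" using rel injU' unfolding p_def \<Psi>_def by (metis inv_into_f_f)
  have p0: "p 0 = 0" using phi0 c0 p_def by simp
  have V'0: "0 \<in> V'" using pV U0 p0 by metis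
  obtain \<phi>d where \<phi>d: "\<forall>t\<in>U. (\<phi> has_real_derivative \<phi>d t) (at t)" "smooth_on U \<phi>d"
    using smooth_on_vd[OF sphi] unfolding has_real_derivative_iff_has_vector_derivative by blast
  obtain D\<Psi> where D\<Psi>: "\<forall>y\<in>V'. (\<Psi> has_derivative D\<Psi> y) (at y)" "\<forall>v. smooth_on V' (\<lambda>y. D\<Psi> y v)"
    using smooth_on_D[OF sPsi] unfolding \<Psi>_def by blast
  obtain D\<Phi> where D\<Phi>: "\<forall>y\<in>U'. (\<Phi> has_derivative D\<Phi> y) (at y)" using smooth_on_D[OF sPhi] by blast
  obtain D\<chi> where D\<chi>: "\<forall>y\<in>V. (inv_into U \<phi> has_derivative D\<chi> y) (at y)" using smooth_on_D[OF sinv] by blast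

  have \<phi>d0: "\<phi>d 0 \<noteq> 0"
  proof
    assume z: "\<phi>d 0 = 0"
    have d1: "(\<phi> has_derivative (*) (\<phi>d 0)) (at 0)" using \<phi>d(1) U0 unfolding has_field_derivative_def by blast
    have d2: "(inv_into U \<phi> has_derivative D\<chi> (\<phi> 0)) (at (\<phi> 0))" using D\<chi> U0 VU by blast
    have "D\<chi> (\<phi> 0) ((*) (\<phi>d 0) 1) = 1"
      by (rule deriv_inv_id[OF d1 d2 oU U0]) (use injU in auto)
    moreover have "bounded_linear (D\<chi> (\<phi> 0))" using d2 has_derivative_bounded_linear by blast
    ultimately show False using z lin_facts(3) by fastforce
  qed

  have E10: "D\<Psi> 0 (1,0) \<noteq> 0"
  proof
    assume z: "D\<Psi> 0 (1,0) = 0"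
    have Psi0: "\<Psi> 0 \<in> U'" using V'0 VU' unfolding \<Psi>_def by (metis inv_into_into)
    have d1: "(\<Psi> has_derivative D\<Psi> 0) (at 0)" using D\<Psi> V'0 by blast
    have d2: "(\<Phi> has_derivative D\<Phi> (\<Psi> 0)) (at (\<Psi> 0))" using D\<Phi> Psi0 by blast
    have "D\<Phi> (\<Psi> 0) (D\<Psi> 0 (1,0)) = (1,0)"
    proof (rule deriv_inv_id[OF d1 d2 _ V'0])
      show "open V'" using dU' unfolding diffeo_on_def by auto
      fix y assume "y \<in> V'" then show "\<Phi> (\<Psi> y) = y" using VU' unfolding \<Psi>_def by (metis f_inv_into_f)
    qed
    moreover have "bounded_linear (D\<Phi> (\<Psi> 0))" using d2 has_derivative_bounded_linear by blast
    ultimately show False using z lin_facts(3) by (fastforce simp: zero_prod_def)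
  qed

  define pd where "pd t = (real n * (\<phi>d t * \<phi> t ^ (n - 1)), real (n + 1) * (\<phi>d t * \<phi> t ^ n))" for t
  have pvd: "(p has_vector_derivative pd t) (at t)" if t: "t \<in> U" for t
  proof -
    have a: "((\<lambda>x. \<phi> x ^ n) has_vector_derivative real n * (\<phi>d t * \<phi> t ^ (n - Suc 0))) (at t)"
      using DERIV_power[OF \<phi>d(1)[rule_format, OF t], of n]
      unfolding has_real_derivative_iff_has_vector_derivative by simp
    have b: "((\<lambda>x. \<phi> x ^ (n + 1)) has_vector_derivative real (n + 1) * (\<phi>d t * \<phi> t ^ n)) (at t)"
      using DERIV_power[OF \<phi>d(1)[rule_format, OF t], of "n + 1"]
      unfolding has_real_derivative_iff_has_vector_derivative by simp
    show ?thesis unfolding p_def cusp_def pd_def using has_vector_derivative_Pair[OF a b] by simp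
  qed
  define E1 where "E1 t = D\<Psi> (p t) (1,0)" for t
  define E2 where "E2 t = D\<Psi> (p t) (0,1)" for t
  define w where "w t = \<phi>d t *\<^sub>R (real n *\<^sub>R E1 t + (real (n + 1) * \<phi> t) *\<^sub>R E2 t)" for t

  have key: "betak \<gamma> \<nu> 0 t *\<^sub>R rotM (\<nu> t) = \<phi> t ^ (n - 1) *\<^sub>R w t" if t: "t \<in> U" "t \<in> I" for t
  proof -
    have dP: "(\<Psi> has_derivative D\<Psi> (p t)) (at (p t))" using D\<Psi> pV t by blast
    have bl: "bounded_linear (D\<Psi> (p t))" using dP has_derivative_bounded_linear by blast
    have "((\<lambda>x. \<Psi> (p x)) has_derivative (\<lambda>h. D\<Psi> (p t) (h *\<^sub>R pd t))) (at t)"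
      using has_derivative_compose[OF pvd[OF t(1), unfolded has_vector_derivative_def] dP] .
    moreover have "(\<lambda>h. D\<Psi> (p t) (h *\<^sub>R pd t)) = (\<lambda>h. h *\<^sub>R D\<Psi> (p t) (pd t))"
      using lin_facts(2)[OF bl] by auto
    ultimately have "((\<lambda>x. \<Psi> (p x)) has_vector_derivative D\<Psi> (p t) (pd t)) (at t)"
      unfolding has_vector_derivative_def by simp
    then have "(\<gamma> has_vector_derivative D\<Psi> (p t) (pd t)) (at t)"
      by (rule has_vector_derivative_transform_within_open[OF _ oU t(1)]) (use Psip in auto)
    then have e1: "betak \<gamma> \<nu> 0 t *\<^sub>R rotM (\<nu> t) = D\<Psi> (p t) (pd t)"
      using gamma_vd[OF oI LI ln t(2)] vector_derivative_unique_at by blast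
    have pdeq: "pd t = \<phi> t ^ (n - 1) *\<^sub>R (\<phi>d t *\<^sub>R (real n *\<^sub>R (1,0) + (real (n + 1) * \<phi> t) *\<^sub>R (0,1)))"
    proof -
      have "\<phi> t ^ n = \<phi> t ^ (n - 1) * \<phi> t" using n2 by (metis Suc_diff_1 le_trans one_le_numeral
          not_one_le_zero not_le power_Suc2 gr0I)
      then show ?thesis unfolding pd_def by (simp add: algebra_simps)
    qed
    have "D\<Psi> (p t) (pd t) = \<phi> t ^ (n - 1) *\<^sub>R w t"
      unfolding w_def E1_def E2_def pdeq by (simp only: lin_facts(1,2)[OF bl])
    with e1 show ?thesis by simp
  qed
  have b: "betak \<gamma> \<nu> 0 t = \<phi> t ^ (n - 1) * (w t \<bullet> rotM (\<nu> t))" if t: "t \<in> U" "t \<in> I" for t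
  proof -
    have rr: "rotM (\<nu> t) \<bullet> rotM (\<nu> t) = 1" using n1 t rot_inner(2) by simp
    have k: "betak \<gamma> \<nu> 0 t *\<^sub>R rotM (\<nu> t) = \<phi> t ^ (n - 1) *\<^sub>R w t" by (rule key[OF t])
    have "betak \<gamma> \<nu> 0 t = (betak \<gamma> \<nu> 0 t *\<^sub>R rotM (\<nu> t)) \<bullet> rotM (\<nu> t)"
      by (simp only: inner_scaleR_left rr mult_1_right)
    also have "\<dots> = \<phi> t ^ (n - 1) * (w t \<bullet> rotM (\<nu> t))"
      by (simp only: k inner_scaleR_left)
    finally show ?thesis .
  qed
  have o: "\<phi> t ^ (n - 1) * (w t \<bullet> \<nu> t) = 0" if t: "t \<in> U" "t \<in> I" for t
  proof -
    have k: "betak \<gamma> \<nu> 0 t *\<^sub>R rotM (\<nu> t) = \<phi> t ^ (n - 1) *\<^sub>R w t" by (rule key[OF t])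
    have "0 = (betak \<gamma> \<nu> 0 t *\<^sub>R rotM (\<nu> t)) \<bullet> \<nu> t"
      by (simp only: inner_scaleR_left rot_inner(1) mult_zero_right)
    also have "\<dots> = \<phi> t ^ (n - 1) * (w t \<bullet> \<nu> t)"
      by (simp only: k inner_scaleR_left)
    finally show ?thesis by simp
  qed

  have cphi: "isCont \<phi> 0" using \<phi>d(1) U0 DERIV_isCont by blast
  have cphid: "isCont \<phi>d 0" using smooth_on_isCont[OF \<phi>d(2) U0] .
  have cp: "isCont p 0" unfolding p_def cusp_def using cphi by (intro continuous_intros)
  have cE1: "isCont E1 0" unfolding E1_def
    by (rule isCont_o2[OF cp]) (use smooth_on_isCont[OF D\<Psi>(2)[rule_format] ] p0 V'0 in auto)
  have cE2: "isCont E2 0" unfolding E2_def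
    by (rule isCont_o2[OF cp]) (use smooth_on_isCont[OF D\<Psi>(2)[rule_format] ] p0 V'0 in auto)
  have cw: "isCont w 0" unfolding w_def using cE1 cE2 cphi cphid by (intro continuous_intros)
  have cnu: "isCont \<nu> 0" using smooth_on_isCont[OF sn I0] .
  have crot: "isCont (\<lambda>t. rotM (\<nu> t)) 0" unfolding rotM_def using cnu by (intro continuous_intros)

  have w0: "w 0 = (\<phi>d 0 * real n) *\<^sub>R D\<Psi> 0 (1,0)" unfolding w_def E1_def using phi0 p0 by simp
  have w0nz: "w 0 \<noteq> 0" using w0 \<phi>d0 E10 n2 by simp

  have oUI: "open (U \<inter> I)" using oU oI by blast
  have UI0: "0 \<in> U \<inter> I" using U0 I0 by blast
  have ev: "eventually (\<lambda>t. t \<in> U \<inter> I - {0}) (at 0)" using eventually_at_in_open[OF oUI UI0] .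
  have "eventually (\<lambda>t. w t \<bullet> \<nu> t = 0) (at 0)"
  proof (rule eventually_mono[OF ev])
    fix t assume t: "t \<in> U \<inter> I - {0}"
    have "\<phi> t \<noteq> 0" using t injU U0 phi0 by (metis DiffE IntD1 inj_on_eq_iff singletonI)
    then show "w t \<bullet> \<nu> t = 0" using o[of t] t by simp
  qed
  then have l0: "((\<lambda>t. w t \<bullet> \<nu> t) \<longlongrightarrow> 0) (at 0)" by (rule tendsto_eventually)
  have "isCont (\<lambda>t. w t \<bullet> \<nu> t) 0" using cw cnu by (intro continuous_intros)
  then have "((\<lambda>t. w t \<bullet> \<nu> t) \<longlongrightarrow> w 0 \<bullet> \<nu> 0) (at 0)" by (rule isContD)
  with l0 have wnu0: "w 0 \<bullet> \<nu> 0 = 0" using tendsto_unique[OF at_neq_bot] by blast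
  have h0: "w 0 \<bullet> rotM (\<nu> 0) \<noteq> 0" using orth_nonzero[OF _ wnu0 w0nz] n1 I0 by blast

  have lphi: "((\<lambda>t. \<phi> t / t) \<longlongrightarrow> \<phi>d 0) (at 0)"
  proof -
    have "(\<lambda>h. (\<phi> (0 + h) - \<phi> 0) / h) \<midarrow>0\<rightarrow> \<phi>d 0"
      using \<phi>d(1) U0 unfolding DERIV_def by blast
    then show ?thesis by (simp add: phi0)
  qed
  have "isCont (\<lambda>t. w t \<bullet> rotM (\<nu> t)) 0" using cw crot by (intro continuous_intros)
  then have lh: "((\<lambda>t. w t \<bullet> rotM (\<nu> t)) \<longlongrightarrow> w 0 \<bullet> rotM (\<nu> 0)) (at 0)" by (rule isContD)
  have L: "((\<lambda>t. (\<phi> t / t) ^ (n - 1) * (w t \<bullet> rotM (\<nu> t))) \<longlongrightarrow> \<phi>d 0 ^ (n - 1) * (w 0 \<bullet> rotM (\<nu> 0))) (at 0)"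
    by (intro tendsto_mult tendsto_power lphi lh)
  have "eventually (\<lambda>t. (\<phi> t / t) ^ (n - 1) * (w t \<bullet> rotM (\<nu> t)) = betak \<gamma> \<nu> 0 t / t ^ (n - 1)) (at 0)"
  proof (rule eventually_mono[OF ev])
    fix t assume t: "t \<in> U \<inter> I - {0}"
    then show "(\<phi> t / t) ^ (n - 1) * (w t \<bullet> rotM (\<nu> t)) = betak \<gamma> \<nu> 0 t / t ^ (n - 1)"
      using b[of t] by (simp add: power_divide)
  qed
  from Lim_transform_eventually[OF L this]
  have "((\<lambda>t. betak \<gamma> \<nu> 0 t / t ^ (n - 1)) \<longlongrightarrow> \<phi>d 0 ^ (n - 1) * (w 0 \<bullet> rotM (\<nu> 0))) (at 0)" .
  moreover have "\<phi>d 0 ^ (n - 1) * (w 0 \<bullet> rotM (\<nu> 0)) \<noteq> 0" using \<phi>d0 h0 by simp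
  ultimately show ?thesis by blast
qed



theorem mainTheorem3:
  fixes I :: "real set" and \<gamma> \<nu> :: "real \<Rightarrow> real \<times> real" and n :: nat
  assumes "n \<ge> 2"
    and "open I" and "is_interval I" and "0 \<in> I"
    and "legendre_immersion_on I \<gamma> \<nu>"
    and "\<forall>t\<in>I. ell \<nu> t \<noteq> 0"
    and "A_equivalent_at \<gamma> 0 (cusp n) 0"
  shows "(\<forall>k\<in>{1..n-2}. vector_derivative (Ev \<gamma> \<nu> k) (at 0) = 0)
         \<and> vector_derivative (Ev \<gamma> \<nu> (n - 1)) (at 0) \<noteq> 0"
proof -
  note n2 = assms(1) and oI = assms(2) and I0 = assms(4) and LI = assms(5) and ln = assms(6)
  obtain c where c: "c \<noteq> 0" "((\<lambda>t. betak \<gamma> \<nu> 0 t / t ^ (n - 1)) \<longlongrightarrow> c) (at 0)"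
    using beta0_lim[OF n2 oI I0 LI ln assms(7)] by blast
  have o0: "ordeq (n - 1) (betak \<gamma> \<nu> 0)"
    by (rule lim_ordeq[OF Sm_betak[OF oI LI ln] oI I0 c])
  have lc: "((ell \<nu>) \<longlongrightarrow> ell \<nu> 0) (at 0)"
    using Sm_deriv_at[OF Sm_ell[OF oI LI ln] I0] DERIV_isCont isContD by blast
  have ok: "k \<le> n - 1 \<Longrightarrow> ordeq (n - 1 - k) (betak \<gamma> \<nu> k)" for k
  proof (induction k)
    case 0 then show ?case using o0 by (simp del: betak.simps)
  next
    case (Suc k)
    define m where "m = n - 1 - Suc k"
    have ih: "ordeq (n - 1 - k) (betak \<gamma> \<nu> k)" by (rule Suc.IH) (use Suc.prems in arith)
    have "n - 1 - k = Suc m" using Suc.prems unfolding m_def by arith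
    with ih have om: "ordeq (Suc m) (betak \<gamma> \<nu> k)" by (simp only:)
    obtain d where d: "d \<noteq> 0" "((\<lambda>t. betak \<gamma> \<nu> k t / t ^ Suc m) \<longlongrightarrow> d) (at 0)"
      using ordeq_lim[OF Sm_betak[OF oI LI ln] oI I0 om] by blast
    have "((\<lambda>t. (betak \<gamma> \<nu> k t / t ^ Suc m) / ell \<nu> t) \<longlongrightarrow> d / ell \<nu> 0) (at 0)"
      using tendsto_divide[OF d(2) lc] ln I0 by blast
    moreover have "(\<lambda>t. (betak \<gamma> \<nu> k t / t ^ Suc m) / ell \<nu> t) = (\<lambda>t. (betak \<gamma> \<nu> k t / ell \<nu> t) / t ^ Suc m)"
      by (rule ext) (simp only: divide_divide_eq_left mult.commute)
    ultimately have "((\<lambda>t. (betak \<gamma> \<nu> k t / ell \<nu> t) / t ^ Suc m) \<longlongrightarrow> d / ell \<nu> 0) (at 0)" by simp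
    moreover have "d / ell \<nu> 0 \<noteq> 0" using d ln I0 by simp
    ultimately have "ordeq (Suc m) (\<lambda>t. betak \<gamma> \<nu> k t / ell \<nu> t)"
      using lim_ordeq[OF Sm_quot[OF oI LI ln Sm_betak[OF oI LI ln]] oI I0] by blast
    then have od: "ordeq m (deriv (\<lambda>t. betak \<gamma> \<nu> k t / ell \<nu> t))" by (rule ordeq_deriv)
    have E: "betak \<gamma> \<nu> (Suc k) = deriv (\<lambda>s. betak \<gamma> \<nu> k s / ell \<nu> s)" by (rule ext) simp
    show ?case unfolding m_def[symmetric] E by (rule od)
  qed
  have A: "\<forall>k\<in>{1..n-2}. vector_derivative (Ev \<gamma> \<nu> k) (at 0) = 0"
  proof
    fix k assume k: "k \<in> {1..n-2}"
    then have "ordeq (n - 1 - k) (betak \<gamma> \<nu> k)" by (intro ok) auto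
    moreover have "0 < n - 1 - k" using k n2 by auto
    ultimately have "betak \<gamma> \<nu> k 0 = 0" unfolding ordeq_def by (metis funpow_0)
    then show "vector_derivative (Ev \<gamma> \<nu> k) (at 0) = 0" using Ev_vder[OF oI LI ln I0] by blast
  qed
  have "ordeq 0 (betak \<gamma> \<nu> (n - 1))" using ok[of "n - 1"] by (simp only: diff_self_eq_0 order_refl)
  then have "betak \<gamma> \<nu> (n - 1) 0 \<noteq> 0" unfolding ordeq_def by (simp del: betak.simps)
  then have "vector_derivative (Ev \<gamma> \<nu> (n - 1)) (at 0) \<noteq> 0" using Ev_vder[OF oI LI ln I0] by blast
  with A show ?thesis by blast
qed

end
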